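(* Let $(V,E^+\uplus E^-)$ be a Correlation Clustering instance with optimum cost $\mathrm{opt}$, let $\mathcal C$ be a clustering of $V$ with $\mathrm{obj}(\mathcal C)\le3\,\mathrm{opt}$, let $\beta=0.1$, and let $\mathcal K$ be the partition of $V$ constructed from $\mathcal C$ as described in the context. Then for every non-singleton atom $K\in\mathcal K$ and every $u\in K$, $|N^+_u\triangle K|<\beta|K|$.
   Context: A Correlation Clustering instance consists of a finite vertex set $V$ and a partition $E^+\uplus E^-=\binom V2$ of unordered pairs of distinct vertices into $+$edges and $-$edges. For a clustering (partition) $\mathcal C$ of $V$, $\mathrm{obj}(\mathcal C)$ is the number of $+$edges between different parts plus the number of $-$edges inside parts; $\mathrm{opt}$ is its minimum. By convention every vertex has a $+$ self-loop, so the set $N^+_u$ of $+$neighbours of $u$ contains $u$. $A\triangle B$ denotes symmetric difference. Construction of $\mathcal K$ with $\beta=0.1$: for every non-singleton $C\in\mathcal C$, mark every $u\in C$ with $|N^+_u\triangle C|>\frac\beta2|C|$, and then, if at least $\frac{\beta|C|}{3}$ vertices of $C$ are marked, mark all vertices of $C$. $\mathcal K$ is obtained from $\mathcal C$ by removing every marked vertex from its cluster and making it a singleton cluster. The parts of $\mathcal K$ are called atoms. *)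

theory Defs
  imports Complex_Main "HOL-Library.Disjoint_Sets"
begin

definition pairs :: "'a set \<Rightarrow> 'a set set" where
  "pairs V = {{u, v} | u v. u \<in> V \<and> v \<in> V \<and> u \<noteq> v}"

text \<open>An instance is given by V and the set Ep of +edges (Ep a subset of pairs V);
  the -edges are pairs V - Ep.\<close>
definition cc_instance :: "'a set \<Rightarrow> 'a set set \<Rightarrow> bool" where
  "cc_instance V Ep \<longleftrightarrow> finite V \<and> Ep \<subseteq> pairs V"

text \<open>+neighbourhood, including the +self-loop.\<close>
definition Nplus :: "'a set set \<Rightarrow> 'a \<Rightarrow> 'a set" where
  "Nplus Ep u = insert u {v. {u, v} \<in> Ep}"

definition obj :: "'a set \<Rightarrow> 'a set set \<Rightarrow> 'a set set \<Rightarrow> nat" where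
  "obj V Ep P = card {e \<in> Ep. \<not> (\<exists>C\<in>P. e \<subseteq> C)}
              + card {e \<in> pairs V - Ep. \<exists>C\<in>P. e \<subseteq> C}"

definition opt :: "'a set \<Rightarrow> 'a set set \<Rightarrow> nat" where
  "opt V Ep = Min {obj V Ep P | P. partition_on V P}"

definition bad :: "real \<Rightarrow> 'a set set \<Rightarrow> 'a set \<Rightarrow> 'a \<Rightarrow> bool" where
  "bad \<beta> Ep C u \<longleftrightarrow> u \<in> C \<and>
     real (card ((Nplus Ep u - C) \<union> (C - Nplus Ep u))) > \<beta> / 2 * real (card C)"

text \<open>Marked vertices (after both rounds), over non-singleton clusters of the clustering P.\<close>
definition marked :: "real \<Rightarrow> 'a set set \<Rightarrow> 'a set set \<Rightarrow> 'a \<Rightarrow> bool" where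
  "marked \<beta> Ep P u \<longleftrightarrow> (\<exists>C\<in>P. card C \<ge> 2 \<and> u \<in> C \<and>
      (bad \<beta> Ep C u \<or> real (card {v \<in> C. bad \<beta> Ep C v}) \<ge> \<beta> * real (card C) / 3))"

definition atoms :: "real \<Rightarrow> 'a set set \<Rightarrow> 'a set set \<Rightarrow> 'a set set" where
  "atoms \<beta> Ep P =
     {C - {u. marked \<beta> Ep P u} | C. C \<in> P \<and> C - {u. marked \<beta> Ep P u} \<noteq> {}}
     \<union> {{u} | u. u \<in> \<Union>P \<and> marked \<beta> Ep P u}"

end

theory Submission
  imports Defs
begin

theorem lemma7:
  fixes V :: "'a set" and Ep :: "'a set set" and \<C> :: "'a set set"
    and K :: "'a set" and u :: 'a
  assumes "cc_instance V Ep"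
    and "partition_on V \<C>"
    and "obj V Ep \<C> \<le> 3 * opt V Ep"
    and "K \<in> atoms (1/10) Ep \<C>"
    and "card K \<ge> 2"
    and "u \<in> K"
  shows "real (card ((Nplus Ep u - K) \<union> (K - Nplus Ep u))) < (1/10) * real (card K)"
proof -
  define M where "M = {u. marked (1/10) Ep \<C> u}"
  have finV: "finite V" using assms(1) by (simp add: cc_instance_def)
  have notsing: "\<not> (\<exists>w. K = {w})" using assms(5) by auto
  then obtain C where C: "C \<in> \<C>" "K = C - M"
    using assms(4) unfolding atoms_def M_def by blast
  have CV: "C \<subseteq> V" using C(1) assms(2) unfolding partition_on_def by blast
  have finC: "finite C" using CV finV finite_subset by blast
  have KC: "K \<subseteq> C" using C by auto
  have cardC: "card C \<ge> 2" using card_mono[OF finC KC] assms(5) by linarith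
  have uniq: "\<And>C'. C' \<in> \<C> \<Longrightarrow> v \<in> C' \<Longrightarrow> v \<in> C \<Longrightarrow> C' = C" for v
    using assms(2) C(1) unfolding partition_on_def disjoint_def by blast
  have uC: "u \<in> C" and uM: "u \<notin> M" using assms(6) C by auto
  have few: "\<not> real (card {v \<in> C. bad (1/10) Ep C v}) \<ge> (1/10) * real (card C) / 3"
    using uM uC cardC C(1) unfolding M_def marked_def by blast
  have ubad: "\<not> bad (1/10) Ep C u"
    using uM uC cardC C(1) unfolding M_def marked_def by blast
  have DB: "C - K \<subseteq> {v \<in> C. bad (1/10) Ep C v}"
  proof
    fix v assume v: "v \<in> C - K"
    then have "marked (1/10) Ep \<C> v" using C M_def by auto
    then obtain C' where "C' \<in> \<C>" "v \<in> C'" and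
      h: "bad (1/10) Ep C' v \<or> real (card {v \<in> C'. bad (1/10) Ep C' v}) \<ge> (1/10) * real (card C') / 3"
      unfolding marked_def by blast
    then have "C' = C" using uniq v by blast
    with h few v show "v \<in> {v \<in> C. bad (1/10) Ep C v}" by auto
  qed
  have cD: "real (card (C - K)) < (1/10) * real (card C) / 3"
    using card_mono[OF _ DB] finC few by fastforce
  have cK: "real (card K) = real (card C) - real (card (C - K))"
    using card_Diff_subset[OF finite_subset[OF KC finC] KC] card_mono[OF finC KC] by simp
  let ?N = "Nplus Ep u"
  have sub: "(?N - K) \<union> (K - ?N) \<subseteq> ((?N - C) \<union> (C - ?N)) \<union> (C - K)" using KC by auto
  have finN: "finite ((?N - C) \<union> (C - ?N))"
  proof -
    have "?N \<subseteq> insert u (\<Union>Ep)" unfolding Nplus_def by auto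
    moreover have "\<Union>Ep \<subseteq> V" using assms(1) unfolding cc_instance_def pairs_def by blast
    ultimately have "finite ?N" using finV finite_subset by (metis finite_insert)
    then show ?thesis using finC by simp
  qed
  have "card ((?N - K) \<union> (K - ?N)) \<le> card (((?N - C) \<union> (C - ?N)) \<union> (C - K))"
    using card_mono[OF _ sub] finN finC by simp
  also have "\<dots> \<le> card ((?N - C) \<union> (C - ?N)) + card (C - K)" by (rule card_Un_le)
  finally have "real (card ((?N - K) \<union> (K - ?N))) \<le> real (card ((?N - C) \<union> (C - ?N))) + real (card (C - K))"
    by linarith
  moreover have "real (card ((?N - C) \<union> (C - ?N))) \<le> (1/10) / 2 * real (card C)"
    using ubad uC unfolding bad_def by auto
  ultimately show ?thesis using cD cK by linarith
qed

end
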